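(* Let $d \geq 3$, let $C \subset \mathbb{R}^d$ be a smooth $d$-dimensional combinatorial cube with faces labeled $F_I^J$ via a fixed face-poset isomorphism with $[0,1]^d$, and let $x,y,z \in \{1,\dots,d\}$ be distinct. Suppose that the faces $F_{xz}$ and $F_{x\bar z}$ are parallel and that the faces $F_{yz}$ and $F_{y\bar z}$ are parallel. Then $F_z$ is parallel to $F_{\bar z}$.
   Context: A lattice polytope is the convex hull of finitely many points of $\mathbb{Z}^d$. A $d$-dimensional polytope is simple if each vertex lies in exactly $d$ edges; the primitive edge directions at a vertex are the smallest lattice vectors along its incident edges; a $d$-dimensional lattice polytope in $\mathbb{R}^d$ is smooth if it is simple and at every vertex the primitive edge directions form a basis of $\mathbb{Z}^d$. A $d$-dimensional combinatorial cube is a polytope $C$ whose face poset is isomorphic to that of $[0,1]^d$. For disjoint $I,J \subseteq \{1,\dots,d\}$ the face of $[0,1]^d$ given by $x_k=0$ for $k\in I$ and $x_k = 1$ for $k \in J$ is denoted $F_I^J$, and the corresponding face of $C$ under the fixed isomorphism is also denoted $F_I^J$. Notation: elements of $J$ are written with a bar and elements of $I$ without, e.g. $F_{x\bar z} = F_{\{x\}}^{\{z\}}$, $F_{\bar z} = F_{\emptyset}^{\{z\}}$, $F_z = F_{\{z\}}^{\emptyset}$. Two faces $F,G$ are parallel if $\mathrm{lin}(F)=\mathrm{lin}(G)$, where $\mathrm{lin}(F)$ is the linear subspace parallel to the affine hull of $F$. *)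

theory Defs
  imports "HOL-Analysis.Analysis"
begin

definition int_vec :: "real^'n \<Rightarrow> bool" where
  "int_vec v \<longleftrightarrow> (\<forall>i. v $ i \<in> \<int>)"

definition lattice_polytope :: "(real^'n) set \<Rightarrow> bool" where
  "lattice_polytope P \<longleftrightarrow> (\<exists>S. finite S \<and> (\<forall>v\<in>S. int_vec v) \<and> P = convex hull S)"

definition poly_edges :: "(real^'n) set \<Rightarrow> (real^'n) set set" where
  "poly_edges P = {E. E face_of P \<and> aff_dim E = 1}"

definition is_vertex :: "(real^'n) set \<Rightarrow> real^'n \<Rightarrow> bool" where
  "is_vertex P v \<longleftrightarrow> {v} face_of P"

definition simple_polytope :: "(real^'n) set \<Rightarrow> bool" where
  "simple_polytope P \<longleftrightarrow> aff_dim P = int CARD('n) \<and>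
     (\<forall>v. is_vertex P v \<longrightarrow> card {E \<in> poly_edges P. v \<in> E} = CARD('n))"

definition prim_edge_dir :: "real^'n \<Rightarrow> (real^'n) set \<Rightarrow> real^'n \<Rightarrow> bool" where
  "prim_edge_dir v E u \<longleftrightarrow> int_vec u \<and> u \<noteq> 0 \<and> (\<exists>t>0. v + t *\<^sub>R u \<in> E) \<and>
     (\<forall>s. 0 < s \<and> s < 1 \<longrightarrow> \<not> int_vec (s *\<^sub>R u))"

definition prim_edge_dirs :: "(real^'n) set \<Rightarrow> real^'n \<Rightarrow> (real^'n) set" where
  "prim_edge_dirs P v = {u. \<exists>E \<in> poly_edges P. v \<in> E \<and> prim_edge_dir v E u}"

definition lattice_basis :: "(real^'n) set \<Rightarrow> bool" where
  "lattice_basis B \<longleftrightarrow> finite B \<and> independent B \<and> (\<forall>b\<in>B. int_vec b) \<and>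
     (\<forall>w. int_vec w \<longrightarrow> (\<exists>c. (\<forall>b\<in>B. c b \<in> \<int>) \<and> w = (\<Sum>b\<in>B. c b *\<^sub>R b)))"

definition smooth_polytope :: "(real^'n) set \<Rightarrow> bool" where
  "smooth_polytope P \<longleftrightarrow> lattice_polytope P \<and> simple_polytope P \<and>
     (\<forall>v. is_vertex P v \<longrightarrow> lattice_basis (prim_edge_dirs P v))"

definition unit_cube :: "(real^'n) set" where
  "unit_cube = cbox 0 1"

definition cube_face :: "'n set \<Rightarrow> 'n set \<Rightarrow> (real^'n) set" where
  "cube_face I J = {p \<in> unit_cube. (\<forall>k\<in>I. p $ k = 0) \<and> (\<forall>k\<in>J. p $ k = 1)}"

definition face_poset_iso :: "((real^'n) set \<Rightarrow> (real^'n) set) \<Rightarrow> (real^'n) set \<Rightarrow> bool" where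
  "face_poset_iso \<phi> C \<longleftrightarrow> bij_betw \<phi> {F. F face_of unit_cube} {F. F face_of C} \<and>
     (\<forall>F G. F face_of unit_cube \<longrightarrow> G face_of unit_cube \<longrightarrow> (F \<subseteq> G \<longleftrightarrow> \<phi> F \<subseteq> \<phi> G))"

definition lin_space :: "(real^'n) set \<Rightarrow> (real^'n) set" where
  "lin_space F = {a - b | a b. a \<in> affine hull F \<and> b \<in> affine hull F}"

definition parallel_faces :: "(real^'n) set \<Rightarrow> (real^'n) set \<Rightarrow> bool" where
  "parallel_faces F G \<longleftrightarrow> lin_space F = lin_space G"

end

theory Submission
  imports Defs
begin

lemma mem_cube_face:
  "p \<in> cube_face I J \<longleftrightarrow> (\<forall>i. 0 \<le> p $ i \<and> p $ i \<le> 1) \<and> (\<forall>k\<in>I. p $ k = 0) \<and> (\<forall>k\<in>J. p $ k = 1)"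
  by (simp add: cube_face_def unit_cube_def mem_box_cart)

lemma convex_unit_cube: "convex (unit_cube :: (real^'n) set)"
  by (simp add: unit_cube_def)

lemma cube_face_face: "cube_face I J face_of (unit_cube :: (real^'n) set)"
proof -
  define Z where "Z k = unit_cube \<inter> {p::real^'n. axis k 1 \<bullet> p = 0}" for k
  define On where "On k = unit_cube \<inter> {p::real^'n. axis k 1 \<bullet> p = 1}" for k
  have Z: "Z k face_of unit_cube" for k
    unfolding Z_def
    by (rule face_of_Int_supporting_hyperplane_ge[OF convex_unit_cube])
       (simp add: unit_cube_def mem_box_cart inner_axis')
  have On: "On k face_of unit_cube" for k
    unfolding On_def
    by (rule face_of_Int_supporting_hyperplane_le[OF convex_unit_cube])
       (simp add: unit_cube_def mem_box_cart inner_axis')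
  have eq: "cube_face I J = \<Inter> (insert unit_cube (Z ` I \<union> On ` J))"
    by (auto simp: cube_face_def Z_def On_def inner_axis')
  show ?thesis unfolding eq
    by (rule face_of_Inter) (auto intro: Z On face_of_refl convex_unit_cube)
qed

lemma cube_between:
  fixes H :: "(real^'n) set"
  assumes xJ: "x \<notin> J" and Hf: "H face_of unit_cube"
    and sub1: "cube_face (insert x I) J \<subseteq> H" and sub2: "H \<subseteq> cube_face I J"
    and ne: "H \<noteq> cube_face (insert x I) J"
  shows "H = cube_face I J"
proof
  show "H \<subseteq> cube_face I J" by fact
  obtain p where pH: "p \<in> H" and pn: "p \<notin> cube_face (insert x I) J"
    using sub1 ne by blast
  have pF: "p \<in> cube_face I J" using pH sub2 by blast
  define t where "t = p $ x"
  have "t \<noteq> 0" using pF pn by (auto simp: mem_cube_face t_def)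
  moreover have "t \<ge> 0" using pF by (simp add: mem_cube_face t_def)
  ultimately have t0: "t > 0" by simp
  define e where "e = (axis x 1 :: real^'n)"
  define p0 where "p0 = p - t *\<^sub>R e"
  have p0F: "p0 \<in> cube_face (insert x I) J"
    using pF xJ t0 unfolding mem_cube_face p0_def e_def t_def
    by (auto simp: axis_def)
  have p0H: "p0 \<in> H" using p0F sub1 by blast
  show "cube_face I J \<subseteq> H"
  proof
    fix q assume qF: "q \<in> cube_face I J"
    define s where "s = q $ x"
    define q0 where "q0 = q - s *\<^sub>R e"
    have q0F: "q0 \<in> cube_face (insert x I) J"
      using qF xJ unfolding mem_cube_face q0_def e_def s_def
      by (auto simp: axis_def)
    have q0H: "q0 \<in> H" using q0F sub1 by blast
    show "q \<in> H"
    proof (cases "s = 0")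
      case True
      then have "q = q0" by (simp add: q0_def)
      then show ?thesis using q0H by simp
    next
      case False
      then have s0: "s > 0" using qF by (simp add: mem_cube_face s_def less_le)
      show ?thesis
      proof (cases "q = p0")
        case True then show ?thesis using p0H by simp
      next
        case False
        define u where "u = s / (t + s)"
        have u01: "0 < u" "u < 1" using s0 t0 by (auto simp: u_def field_simps)
        define m where "m = (1 - u) *\<^sub>R q + u *\<^sub>R p0"
        have meq: "m = (s / (t + s)) *\<^sub>R p + (t / (t + s)) *\<^sub>R q0"
          unfolding vec_eq_iff m_def u_def p0_def q0_def
          using s0 t0 by (simp add: field_simps)
        have "convex H" using Hf face_of_imp_convex by blast
        then have mH: "m \<in> H" unfolding meq
          using pH q0H s0 t0 by (simp add: convex_def add_divide_distrib[symmetric])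
        have "m \<in> open_segment q p0"
          using False u01 by (auto simp: in_segment m_def)
        moreover have "q \<in> unit_cube" "p0 \<in> unit_cube"
          using qF p0F by (auto simp: cube_face_def)
        ultimately show ?thesis using Hf mH unfolding face_of_def by blast
      qed
    qed
  qed
qed


lemma lin_space_span:
  fixes S :: "(real^'n) set"
  assumes "a \<in> S"
  shows "lin_space S = span ((+) (- a) ` S)"
proof -
  have ah: "affine hull S = (\<lambda>x. a + x) ` span ((+) (- a) ` S)"
    by (metis affine_hull_span_gen assms hull_inc)
  show ?thesis
  proof
    show "lin_space S \<subseteq> span ((+) (- a) ` S)"
      unfolding lin_space_def ah by (auto intro: span_diff)
  next
    show "span ((+) (- a) ` S) \<subseteq> lin_space S"
    proof
      fix w assume w: "w \<in> span ((+) (- a) ` S)"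
      have "a + w \<in> affine hull S" unfolding ah using w by blast
      moreover have "a \<in> affine hull S" using assms by (simp add: hull_inc)
      ultimately show "w \<in> lin_space S" unfolding lin_space_def
        by (metis (mono_tags, lifting) add_diff_cancel_left' mem_Collect_eq)
    qed
  qed
qed

lemma lin_space_subspace: "a \<in> S \<Longrightarrow> subspace (lin_space S)"
  by (simp add: lin_space_span)

lemma lin_space_dim:
  fixes S :: "(real^'n) set"
  assumes "a \<in> S" shows "int (dim (lin_space S)) = aff_dim S"
  using assms aff_dim_eq_dim_subtract[of a S] hull_inc[OF assms] by (simp add: lin_space_span)

lemma lin_space_mono: "S \<subseteq> T \<Longrightarrow> lin_space S \<subseteq> lin_space T"
  unfolding lin_space_def using hull_mono by blast

lemma affine_hull_lin_space:
  fixes S :: "(real^'n) set"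
  assumes "a \<in> S" shows "affine hull S = (\<lambda>x. a + x) ` lin_space S"
  by (metis affine_hull_span_gen hull_inc lin_space_span assms)

lemma span_two:
  fixes LA LB LG :: "(real^'n) set"
  assumes sA: "subspace LA" and sB: "subspace LB" and sG: "subspace LG"
    and "LA \<subseteq> LG" "LB \<subseteq> LG" and dA: "dim LA + 1 = dim LG" and dB: "dim LB + 1 = dim LG"
    and ne: "LA \<noteq> LB"
  shows "LG = span (LA \<union> LB)"
proof -
  define U where "U = span (LA \<union> LB)"
  have sU: "subspace U" by (simp add: U_def)
  have UG: "U \<subseteq> LG" unfolding U_def using assms
    by (metis le_sup_iff sG span_minimal)
  have AU: "LA \<subseteq> U" "LB \<subseteq> U" unfolding U_def by (auto intro: span_base)
  have "\<not> dim U \<le> dim LA"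
  proof
    assume le: "dim U \<le> dim LA"
    then have "LA = U" using subspace_dim_equal[OF sA sU AU(1)] by simp
    moreover have "LB = U" using subspace_dim_equal[OF sB sU AU(2)] le dA dB by simp
    ultimately show False using ne by simp
  qed
  then have "dim LG \<le> dim U" using dA by simp
  then have "U = LG" using subspace_dim_equal[OF sU sG UG] by simp
  then show ?thesis by (simp add: U_def)
qed


lemma lin_space_neq:
  fixes C P Q :: "(real^'n) set"
  assumes "convex C" "P face_of C" "Q face_of C" "a \<in> P" "a \<in> Q" "P \<noteq> Q"
  shows "lin_space P \<noteq> lin_space Q"
proof
  assume eq: "lin_space P = lin_space Q"
  have "affine hull P = affine hull Q"
    using affine_hull_lin_space[OF assms(4)] affine_hull_lin_space[OF assms(5)] eq by simp
  then have "P = Q"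
    using face_of_imp_eq_affine_Int[OF assms(1) assms(2)] face_of_imp_eq_affine_Int[OF assms(1) assms(3)]
    by simp
  then show False using assms(6) by simp
qed

lemma lin_combine:
  fixes C A B G :: "(real^'n) set"
  assumes "convex C" "A face_of C" "B face_of C" "A \<subseteq> G" "B \<subseteq> G" "a \<in> A" "a \<in> B" "A \<noteq> B"
    and dA: "aff_dim A = aff_dim G - 1" and dB: "aff_dim B = aff_dim G - 1"
  shows "lin_space G = span (lin_space A \<union> lin_space B)"
proof (rule span_two)
  have aG: "a \<in> G" using assms by blast
  show "subspace (lin_space A)" "subspace (lin_space B)" "subspace (lin_space G)"
    using lin_space_subspace assms aG by blast+
  show "lin_space A \<subseteq> lin_space G" "lin_space B \<subseteq> lin_space G"
    using lin_space_mono assms by blast+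
  show "dim (lin_space A) + 1 = dim (lin_space G)"
    using lin_space_dim[OF assms(6)] lin_space_dim[OF aG] dA by linarith
  show "dim (lin_space B) + 1 = dim (lin_space G)"
    using lin_space_dim[OF assms(7)] lin_space_dim[OF aG] dB by linarith
  show "lin_space A \<noteq> lin_space B"
    using lin_space_neq assms by blast
qed

locale fpi =
  fixes \<phi> :: "(real^'n) set \<Rightarrow> (real^'n) set" and C :: "(real^'n) set"
  assumes iso: "face_poset_iso \<phi> C" and polyC: "polytope C"
begin

lemma bij: "bij_betw \<phi> {F. F face_of unit_cube} {F. F face_of C}"
  using iso unfolding face_poset_iso_def by (rule conjunct1)

lemma ord: "\<forall>F G. F face_of unit_cube \<longrightarrow> G face_of unit_cube \<longrightarrow> (F \<subseteq> G \<longleftrightarrow> \<phi> F \<subseteq> \<phi> G)"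
  using iso unfolding face_poset_iso_def by (rule conjunct2)


lemma face: "F face_of unit_cube \<Longrightarrow> \<phi> F face_of C"
  using bij_betw_apply[OF bij, of F] by simp

lemma surj: "K face_of C \<Longrightarrow> \<exists>H. H face_of unit_cube \<and> \<phi> H = K"
proof -
  assume K: "K face_of C"
  have "\<phi> ` {F. F face_of unit_cube} = {F. F face_of C}" using bij by (simp add: bij_betw_def)
  then have "K \<in> \<phi> ` {F. F face_of unit_cube}" using K by simp
  then show ?thesis by blast
qed

lemma mono_iff: "F face_of unit_cube \<Longrightarrow> G face_of unit_cube \<Longrightarrow> F \<subseteq> G \<longleftrightarrow> \<phi> F \<subseteq> \<phi> G"
  using ord by simp

lemma inj: "F face_of unit_cube \<Longrightarrow> G face_of unit_cube \<Longrightarrow> \<phi> F = \<phi> G \<Longrightarrow> F = G"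
  using mono_iff[of F G] mono_iff[of G F] by (simp add: subset_antisym)

lemma empty: "\<phi> {} = {}"
proof -
  obtain H where H: "H face_of unit_cube" "\<phi> H = {}" using surj[of "{}"] by auto
  have "H \<subseteq> {}" using mono_iff[OF H(1) empty_face_of] H(2) by simp
  then show ?thesis using H by simp
qed

lemma nonempty: "F face_of unit_cube \<Longrightarrow> F \<noteq> {} \<Longrightarrow> \<phi> F \<noteq> {}"
  using inj[of F "{}"] empty by auto

lemma facet:
  assumes xJ: "x \<notin> J" and ne1: "cube_face (insert x I) J \<noteq> {}"
    and ne2: "cube_face (insert x I) J \<noteq> cube_face I J"
  shows "aff_dim (\<phi> (cube_face (insert x I) J)) = aff_dim (\<phi> (cube_face I J)) - 1"
proof -
  let ?F' = "cube_face (insert x I) J" and ?F = "cube_face I J"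
  have f1: "?F' face_of unit_cube" and f2: "?F face_of unit_cube" by (rule cube_face_face)+
  have sub: "?F' \<subseteq> ?F" by (auto simp: cube_face_def)
  have G: "\<phi> ?F face_of C" using face[OF f2] .
  have "polytope (\<phi> ?F)" using face_of_polytope_polytope[OF polyC G] .
  then have ph: "polyhedron (\<phi> ?F)" by (rule polytope_imp_polyhedron)
  have A: "\<phi> ?F' face_of C" using face[OF f1] .
  have AG: "\<phi> ?F' \<subseteq> \<phi> ?F" using mono_iff[OF f1 f2] sub by blast
  have AfG: "\<phi> ?F' face_of \<phi> ?F"
    using face_of_subset[OF A AG face_of_imp_subset[OF G]] .
  have Ane: "\<phi> ?F' \<noteq> {}" using nonempty[OF f1 ne1] .
  have AneG: "\<phi> ?F' \<noteq> \<phi> ?F" using inj[OF f1 f2] ne2 by blast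
  obtain K where K: "K facet_of \<phi> ?F" "\<phi> ?F' \<subseteq> K"
    using face_of_polyhedron_subset_facet[OF ph AfG Ane AneG] by blast
  have KC: "K face_of C" using K(1) G unfolding facet_of_def by (meson face_of_trans)
  obtain H where H: "H face_of unit_cube" "\<phi> H = K" using surj[OF KC] by blast
  have KG: "K \<subseteq> \<phi> ?F" using K(1) unfolding facet_of_def by (meson face_of_imp_subset)
  have H1: "?F' \<subseteq> H" using mono_iff[OF f1 H(1)] H K by simp
  have H2: "H \<subseteq> ?F" using mono_iff[OF H(1) f2] H KG by simp
  have "K \<noteq> \<phi> ?F" using K(1) by (auto simp: facet_of_def)
  then have "H \<noteq> ?F" using H by blast
  then have "H = ?F'" using cube_between[OF xJ H(1) H1 H2] by blast
  then show ?thesis using K H by (simp add: facet_of_def)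
qed

end


theorem corollary3p2:
  fixes C :: "(real^'n) set" and \<phi> :: "(real^'n) set \<Rightarrow> (real^'n) set" and x y z :: 'n
  assumes "CARD('n) \<ge> 3"
    and "smooth_polytope C"
    and "face_poset_iso \<phi> C"
    and "x \<noteq> y" "y \<noteq> z" "x \<noteq> z"
    and "parallel_faces (\<phi> (cube_face {x, z} {})) (\<phi> (cube_face {x} {z}))"
    and "parallel_faces (\<phi> (cube_face {y, z} {})) (\<phi> (cube_face {y} {z}))"
  shows "parallel_faces (\<phi> (cube_face {z} {})) (\<phi> (cube_face {} {z}))"
proof -
  have polyC: "polytope C"
    using assms(2) unfolding smooth_polytope_def lattice_polytope_def polytope_def by blast
  then have cC: "convex C" by (simp add: polytope_imp_convex)
  interpret fpi \<phi> C using assms(3) polyC by unfold_locales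
  have xy: "x \<noteq> y" and yz: "y \<noteq> z" and xz: "x \<noteq> z" by fact+
  note cf = cube_face_face
  define e1 :: "real^'n" where "e1 = (\<chi> i. if i = z then 1 else 0)"
  define e2 :: "real^'n" where "e2 = (\<chi> i. if i = y then 1 else 0)"
  define e3 :: "real^'n" where "e3 = (\<chi> i. if i = y \<or> i = z then 1 else 0)"
  define e4 :: "real^'n" where "e4 = (\<chi> i. if i = x then 1 else 0)"
  define e5 :: "real^'n" where "e5 = (\<chi> i. if i = x \<or> i = z then 1 else 0)"
  have m0: "0 \<in> cube_face {x,y,z} {}" "0 \<in> cube_face {x,z} {}" "0 \<in> cube_face {y,z} {}"
    by (simp_all add: mem_cube_face)
  have m1: "e1 \<in> cube_face {x,y} {z}" "e1 \<in> cube_face {x} {z}" "e1 \<in> cube_face {y} {z}"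
    using xz yz by (simp_all add: mem_cube_face e1_def)
  have m2: "e2 \<in> cube_face {x,z} {}" "e2 \<notin> cube_face {y,z} {}" "e2 \<in> cube_face {z} {}"
    using xy yz by (auto simp: mem_cube_face e2_def)
  have m3: "e3 \<in> cube_face {x} {z}" "e3 \<notin> cube_face {y} {z}" "e3 \<in> cube_face {} {z}"
    using xy yz xz by (auto simp: mem_cube_face e3_def)
  have m4: "e4 \<in> cube_face {z} {}" "e4 \<notin> cube_face {x,z} {}"
    using xz by (auto simp: mem_cube_face e4_def)
  have m5: "e5 \<in> cube_face {} {z}" "e5 \<notin> cube_face {x} {z}"
    using xz by (auto simp: mem_cube_face e5_def)
  have dA: "aff_dim (\<phi> (cube_face {x,z} {})) = aff_dim (\<phi> (cube_face {z} {})) - 1"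
    by (rule facet) (use m0 m4 in auto)
  have dB: "aff_dim (\<phi> (cube_face {y,z} {})) = aff_dim (\<phi> (cube_face {z} {})) - 1"
    by (rule facet) (use m0 m2 in auto)
  have dA': "aff_dim (\<phi> (cube_face {x} {z})) = aff_dim (\<phi> (cube_face {} {z})) - 1"
    by (rule facet) (use m1 m5 xz in auto)
  have dB': "aff_dim (\<phi> (cube_face {y} {z})) = aff_dim (\<phi> (cube_face {} {z})) - 1"
    by (rule facet) (use m1 m3 yz in auto)
  have s1: "cube_face {x,y,z} {} \<subseteq> cube_face {x,z} {}" "cube_face {x,y,z} {} \<subseteq> cube_face {y,z} {}"
    "cube_face {x,z} {} \<subseteq> cube_face {z} {}" "cube_face {y,z} {} \<subseteq> cube_face {z} {}"
    "cube_face {x,y} {z} \<subseteq> cube_face {x} {z}" "cube_face {x,y} {z} \<subseteq> cube_face {y} {z}"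
    "cube_face {x} {z} \<subseteq> cube_face {} {z}" "cube_face {y} {z} \<subseteq> cube_face {} {z}"
    by (auto simp: cube_face_def)
  have s2: "\<phi> (cube_face {x,y,z} {}) \<subseteq> \<phi> (cube_face {x,z} {})" "\<phi> (cube_face {x,y,z} {}) \<subseteq> \<phi> (cube_face {y,z} {})"
    "\<phi> (cube_face {x,z} {}) \<subseteq> \<phi> (cube_face {z} {})" "\<phi> (cube_face {y,z} {}) \<subseteq> \<phi> (cube_face {z} {})"
    "\<phi> (cube_face {x,y} {z}) \<subseteq> \<phi> (cube_face {x} {z})" "\<phi> (cube_face {x,y} {z}) \<subseteq> \<phi> (cube_face {y} {z})"
    "\<phi> (cube_face {x} {z}) \<subseteq> \<phi> (cube_face {} {z})" "\<phi> (cube_face {y} {z}) \<subseteq> \<phi> (cube_face {} {z})"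
    using s1 mono_iff[OF cf cf] by blast+
  obtain a where a: "a \<in> \<phi> (cube_face {x,y,z} {})"
    using nonempty[OF cf, of "{x,y,z}" "{}"] m0 by blast
  obtain b where b: "b \<in> \<phi> (cube_face {x,y} {z})"
    using nonempty[OF cf, of "{x,y}" "{z}"] m1 by blast
  have nAB: "\<phi> (cube_face {x,z} {}) \<noteq> \<phi> (cube_face {y,z} {})"
    using inj[OF cf cf, of "{x,z}" "{}" "{y,z}" "{}"] m2 by blast
  have nAB': "\<phi> (cube_face {x} {z}) \<noteq> \<phi> (cube_face {y} {z})"
    using inj[OF cf cf, of "{x}" "{z}" "{y}" "{z}"] m3 by blast
  have L1: "lin_space (\<phi> (cube_face {z} {})) =
      span (lin_space (\<phi> (cube_face {x,z} {})) \<union> lin_space (\<phi> (cube_face {y,z} {})))"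
    by (rule lin_combine[OF cC face[OF cf] face[OF cf] s2(3) s2(4) _ _ nAB dA dB, of a])
       (use a s2 in blast)+
  have L2: "lin_space (\<phi> (cube_face {} {z})) =
      span (lin_space (\<phi> (cube_face {x} {z})) \<union> lin_space (\<phi> (cube_face {y} {z})))"
    by (rule lin_combine[OF cC face[OF cf] face[OF cf] s2(7) s2(8) _ _ nAB' dA' dB', of b])
       (use b s2 in blast)+
  show ?thesis using L1 L2 assms(7,8) by (simp add: parallel_faces_def)
qed

end
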